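(* Let $V$ be a finite dimensional real vector space, let $S$ be a commutative subsemigroup of $GL(V)$ and let $G$ be its Zariski closure in $GL(V)$. Suppose that the orbit $Sx=\{sx: s\in S\}$ of some $x\in V$ is somewhere dense in $V$ (its closure contains a non-empty open subset of $V$). Then the map $G\to Gx$, $g\mapsto gx$, is a diffeomorphism of $G$ onto an open subset of $V$. In particular, $S$ is somewhere dense in $G$ (its closure in $G$ contains a non-empty open subset of $G$). *)

theory Defs
  imports "HOL-Analysis.Analysis"
begin

inductive_set matrix_poly_fun :: "(real^'n^'n \<Rightarrow> real) set" where
  const: "(\<lambda>A. c) \<in> matrix_poly_fun"
| entry: "(\<lambda>A. A $ i $ j) \<in> matrix_poly_fun"
| add: "p \<in> matrix_poly_fun \<Longrightarrow> q \<in> matrix_poly_fun \<Longrightarrow> (\<lambda>A. p A + q A) \<in> matrix_poly_fun"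
| mult: "p \<in> matrix_poly_fun \<Longrightarrow> q \<in> matrix_poly_fun \<Longrightarrow> (\<lambda>A. p A * q A) \<in> matrix_poly_fun"

definition zariski_closure_GL :: "(real^'n^'n) set \<Rightarrow> (real^'n^'n) set" where
  "zariski_closure_GL S = {A. invertible A \<and>
     (\<forall>p \<in> matrix_poly_fun. (\<forall>s\<in>S. p s = 0) \<longrightarrow> p A = 0)}"

fun Ck_on :: "nat \<Rightarrow> 'a::euclidean_space set \<Rightarrow> ('a \<Rightarrow> 'b::real_normed_vector) \<Rightarrow> bool" where
  "Ck_on 0 U f = continuous_on U f"
| "Ck_on (Suc k) U f = (\<exists>f'. (\<forall>x\<in>U. (f has_derivative f' x) (at x)) \<and>
                              (\<forall>v. Ck_on k U (\<lambda>x. f' x v)))"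

definition c_infinity_on :: "'a::euclidean_space set \<Rightarrow> ('a \<Rightarrow> 'b::real_normed_vector) \<Rightarrow> bool" where
  "c_infinity_on U f \<longleftrightarrow> (\<forall>k. Ck_on k U f)"

end

theory Submission imports Defs "HOL-Computational_Algebra.Polynomial" begin

lemma mpf_sum: "finite I \<Longrightarrow> (\<forall>i\<in>I. f i \<in> matrix_poly_fun) \<Longrightarrow> (\<lambda>A. \<Sum>i\<in>I. f i A) \<in> matrix_poly_fun"
proof (induction I rule: finite_induct)
  case empty then show ?case using matrix_poly_fun.const[of 0] by simp
next
  case (insert a F) then show ?case using matrix_poly_fun.add[of "f a" "\<lambda>A. \<Sum>i\<in>F. f i A"] by simp
qed

lemma mpf_prod: "finite I \<Longrightarrow> (\<forall>i\<in>I. f i \<in> matrix_poly_fun) \<Longrightarrow> (\<lambda>A. \<Prod>i\<in>I. f i A) \<in> matrix_poly_fun"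
proof (induction I rule: finite_induct)
  case empty then show ?case using matrix_poly_fun.const[of 1] by simp
next
  case (insert a F) then show ?case using matrix_poly_fun.mult[of "f a" "\<lambda>A. \<Prod>i\<in>F. f i A"] by simp
qed

lemma mpf_det: "(det :: real^'n^'n \<Rightarrow> real) \<in> matrix_poly_fun"
proof -
  have "(\<lambda>A::real^'n^'n. \<Sum>p\<in>{p. p permutes UNIV}. of_int (sign p) * (\<Prod>i\<in>UNIV. A $ i $ p i)) \<in> matrix_poly_fun"
    by (rule mpf_sum) (auto intro!: matrix_poly_fun.mult matrix_poly_fun.const mpf_prod matrix_poly_fun.entry finite_permutations)
  then show ?thesis unfolding det_def[abs_def] by simp
qed

lemma mpf_cont: "p \<in> matrix_poly_fun \<Longrightarrow> continuous_on UNIV p"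
  by (induction rule: matrix_poly_fun.induct) (auto intro!: continuous_intros)

lemma mpf_line: "p \<in> matrix_poly_fun \<Longrightarrow> \<exists>P. \<forall>t. p (M + t *\<^sub>R N) = poly P t"
proof (induction rule: matrix_poly_fun.induct)
  case (const c) then show ?case by (intro exI[of _ "[:c:]"]) simp
next
  case (entry i j) then show ?case by (intro exI[of _ "[:M$i$j, N$i$j:]"]) (simp add: algebra_simps)
next
  case (add p q) then show ?case by (metis poly_add)
next
  case (mult p q) then show ?case by (metis poly_mult)
qed

lemma open_inv: "open {M::real^'n^'n. invertible M}"
proof -
  have "{M::real^'n^'n. invertible M} = det -` (UNIV - {0})" by (auto simp: invertible_det_nz)
  moreover have "open (det -` (UNIV - {0::real}) :: (real^'n^'n) set)"
    using mpf_cont[OF mpf_det] by (auto intro!: open_vimage simp: continuous_on_eq_continuous_at)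
  ultimately show ?thesis by simp
qed

lemma Ck_const: "Ck_on k U (\<lambda>x. c)"
proof (induction k arbitrary: c)
  case 0 then show ?case by simp
next
  case (Suc k) then show ?case by (auto intro!: exI[of _ "\<lambda>x v. 0"])
qed

lemma Ck_lin: "open U \<Longrightarrow> linear g \<Longrightarrow> (\<forall>x\<in>U. f x = g x) \<Longrightarrow> Ck_on k U (f::'a::euclidean_space \<Rightarrow> 'b::euclidean_space)"
proof (cases k)
  case 0
  assume "open U" "linear g" "\<forall>x\<in>U. f x = g x"
  then show ?thesis using 0 linear_continuous_on[of g U] continuous_on_cong
    by (metis Ck_on.simps(1) linear_linear)
next
  case (Suc j)
  assume a: "open U" "linear g" "\<forall>x\<in>U. f x = g x"
  have "\<forall>x\<in>U. (f has_derivative g) (at x)"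
  proof
    fix x assume "x \<in> U"
    have "(g has_derivative g) (at x)" using a(2) by (simp add: linear_linear bounded_linear_imp_has_derivative)
    then show "(f has_derivative g) (at x)"
      by (rule has_derivative_transform_within_open[OF _ a(1) \<open>x\<in>U\<close>]) (use a in auto)
  qed
  then show ?thesis using Suc by (auto intro!: exI[of _ "\<lambda>x. g"] Ck_const)
qed

lemma mm_scale_l: "(c *\<^sub>R A) ** (B::real^'n^'n) = c *\<^sub>R (A ** B)"
  by (vector matrix_matrix_mult_def sum_distrib_left mult.assoc)
lemma mm_scale_r: "A ** (c *\<^sub>R (B::real^'n^'n)) = c *\<^sub>R (A ** B)"
  by (vector matrix_matrix_mult_def sum_distrib_left mult.assoc mult.left_commute)
lemma mm_add_r: "(A + B) ** (C::real^'n^'n) = A ** C + B ** C"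
  by (vector matrix_matrix_mult_def sum.distrib distrib_right)

lemma ball_span_UNIV:
  fixes T :: "'a::real_normed_vector set"
  assumes r: "r > 0" and b: "ball y0 r \<subseteq> span T"
  shows "span T = UNIV"
proof -
  have "z \<in> span T" for z
  proof -
    define e where "e = r / (2 * (norm z + 1))"
    have e: "e > 0" unfolding e_def using r by (smt (verit) divide_pos_pos norm_ge_zero)
    have n1: "norm z + 1 > 0" using norm_ge_zero[of z] by linarith
    have "norm (e *\<^sub>R z) = e * norm z" using e by simp
    also have "\<dots> \<le> e * (norm z + 1)" using e by simp
    also have "e * (norm z + 1) = r / 2" using n1 unfolding e_def by (simp add: field_simps)
    finally have "norm (e *\<^sub>R z) < r" using r by simp
    then have "y0 + e *\<^sub>R z \<in> span T" "y0 \<in> span T" using b r by (auto simp: dist_norm)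
    then have "(1/e) *\<^sub>R ((y0 + e *\<^sub>R z) - y0) \<in> span T" by (intro span_mul span_diff)
    then show ?thesis using e by simp
  qed
  then show ?thesis by auto
qed

theorem proposition3p2:
  fixes S :: "(real^'n^'n) set" and x :: "real^'n"
  assumes S_GL: "\<forall>s\<in>S. invertible s"
    and S_semigroup: "\<forall>s\<in>S. \<forall>t\<in>S. s ** t \<in> S"
    and S_comm: "\<forall>s\<in>S. \<forall>t\<in>S. s ** t = t ** s"
    and dense: "interior (closure {s *v x | s. s \<in> S}) \<noteq> {}"
  shows "inj_on (\<lambda>g. g *v x) (zariski_closure_GL S)
       \<and> open ((\<lambda>g. g *v x) ` zariski_closure_GL S)
       \<and> c_infinity_on ((\<lambda>g. g *v x) ` zariski_closure_GL S)
                       (the_inv_into (zariski_closure_GL S) (\<lambda>g. g *v x))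
       \<and> (\<exists>U. openin (top_of_set (zariski_closure_GL S)) U \<and> U \<noteq> {} \<and> U \<subseteq> closure S)"
proof -
  define L where "L = (\<lambda>g::real^'n^'n. g *v x)"
  define G where "G = zariski_closure_GL S"
  have linL: "linear L" unfolding L_def
    by (rule linearI) (simp_all add: matrix_vector_mult_add_rdistrib scaleR_matrix_vector_assoc)
  define Y where "Y = {s *v x | s. s \<in> S}"
  have YL: "Y = L ` S" by (auto simp: Y_def L_def)
  obtain y0 where y0: "y0 \<in> interior (closure Y)" using dense unfolding Y_def by blast
  then obtain r where r0: "r > 0" "ball y0 r \<subseteq> interior (closure Y)"
    using open_interior open_contains_ball by blast
  then have r: "r > 0" "ball y0 r \<subseteq> closure Y" using interior_subset by blast+
  have "closure Y \<subseteq> span Y" by (simp add: closure_minimal span_superset)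
  then have "ball y0 r \<subseteq> span Y" using r(2) by (rule_tac order_trans)
  then have spanY: "span Y = UNIV" using r(1) ball_span_UNIV by blast
  have spanL: "L ` span S = UNIV" using spanY YL linear_span_image[OF linL] by simp
  have comm: "a ** s = s ** a" if "a \<in> span S" "s \<in> S" for a s
    using that(1)
  proof (induction rule: span_induct_alt)
    case base then show ?case by (vector matrix_matrix_mult_def)
  next
    case (step c y z)
    then show ?case using S_comm that(2)
      by (simp add: mm_scale_l mm_scale_r mm_add_r matrix_add_ldistrib)
  qed
  have ker: "d = 0" if "d \<in> span S" "L d = 0" for d
  proof -
    have Yz0: "\<forall>y\<in>Y. d *v y = 0"
    proof
      fix y assume "y \<in> Y" then obtain s where s: "s \<in> S" "y = s *v x" by (auto simp: Y_def)
      have "d *v y = (d ** s) *v x" using s by (simp add: matrix_vector_mul_assoc)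
      also have "\<dots> = (s ** d) *v x" using comm[OF that(1) s(1)] by simp
      also have "\<dots> = s *v (d *v x)" by (simp add: matrix_vector_mul_assoc)
      also have "\<dots> = 0" using that(2) by (simp add: L_def)
      finally show "d *v y = 0" .
    qed
    note Yz = this
    have "d *v y = 0" if "y \<in> span Y" for y
      using that by (induction rule: span_induct_alt) (use Yz in \<open>auto simp: matrix_vector_right_distrib matrix_vector_mult_scaleR\<close>)
    then show ?thesis using spanY by (simp add: matrix_eq)
  qed
  have injL: "inj_on L (span S)"
  proof (rule inj_onI)
    fix a b assume "a \<in> span S" "b \<in> span S" "L a = L b"
    then have "a - b = 0" using ker[of "a - b"] span_diff linear_diff[OF linL] by auto
    then show "a = b" by simp
  qed
  obtain \<phi> where phi: "range \<phi> \<subseteq> span S" "linear \<phi>" "\<forall>a\<in>span S. \<phi> (L a) = a"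
    using linear_inj_on_left_inverse[OF linL injL] by blast
  have Lphi: "L (\<phi> y) = y" for y
  proof -
    obtain a where "a \<in> span S" "y = L a" using spanL by (metis UNIV_I imageE)
    then show ?thesis using phi by simp
  qed
  have contphi: "continuous_on UNIV \<phi>" using phi(2) by (simp add: linear_continuous_on linear_linear)
  have SG: "S \<subseteq> G" using S_GL unfolding G_def zariski_closure_GL_def by auto
  have G_eq: "G = span S \<inter> {M. invertible M}"
  proof
    show "G \<subseteq> span S \<inter> {M. invertible M}"
    proof
      fix A assume AG: "A \<in> G"
      obtain y z where yz: "y \<in> span S" "\<And>w. w \<in> span S \<Longrightarrow> orthogonal z w" "A = y + z"
        using orthogonal_subspace_decomp_exists by blast
      define p where "p = (\<lambda>M::real^'n^'n. \<Sum>i\<in>UNIV. \<Sum>j\<in>UNIV. M$i$j * z$i$j)"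
      have pin: "\<And>M. p M = M \<bullet> z" by (simp add: p_def inner_vec_def)
      have "p \<in> matrix_poly_fun" unfolding p_def
        by (intro mpf_sum ballI matrix_poly_fun.mult matrix_poly_fun.entry matrix_poly_fun.const) simp_all
      moreover have "\<forall>s\<in>S. p s = 0" using yz(2) span_superset by (auto simp: pin orthogonal_def inner_commute)
      ultimately have "p A = 0" using AG by (auto simp: G_def zariski_closure_GL_def)
      moreover have "y \<bullet> z = 0" using yz(1,2) by (simp add: orthogonal_def inner_commute)
      ultimately have "z \<bullet> z = 0" using yz(3) by (simp add: pin inner_add_left)
      then have "z = 0" by simp
      then show "A \<in> span S \<inter> {M. invertible M}" using yz AG by (simp add: G_def zariski_closure_GL_def)
    qed
  next
    show "span S \<inter> {M. invertible M} \<subseteq> G"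
    proof
      fix A assume A: "A \<in> span S \<inter> {M. invertible M}"
      have "q A = 0" if q: "q \<in> matrix_poly_fun" "\<forall>s\<in>S. q s = 0" for q
      proof -
        have cq: "continuous_on UNIV (q \<circ> \<phi>)"
          by (rule continuous_on_compose[OF contphi continuous_on_subset[OF mpf_cont[OF q(1)]]]) simp
        have "Y \<subseteq> {y \<in> UNIV. (q \<circ> \<phi>) y = 0}" using q(2) phi(3) span_superset unfolding YL by fastforce
        then have "closure Y \<subseteq> {y \<in> UNIV. (q \<circ> \<phi>) y = 0}"
          by (intro closure_minimal continuous_closed_preimage_constant cq) auto
        then have zb: "\<And>y. y \<in> ball y0 r \<Longrightarrow> q (\<phi> y) = 0" using r by auto
        define c where "c = \<phi> y0"
        obtain P where P: "\<forall>t. q (c + t *\<^sub>R (A - c)) = poly P t" using mpf_line[OF q(1)] by blast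
        define \<delta> where "\<delta> = r / (norm (L A - y0) + 1)"
        have dpos: "\<delta> > 0" unfolding \<delta>_def using r(1) norm_ge_zero[of "L A - y0"] by (smt (verit) divide_pos_pos)
        have "poly P t = 0" if t: "t \<in> {0<..<\<delta>}" for t
        proof -
          have "\<phi> (y0 + t *\<^sub>R (L A - y0)) = c + t *\<^sub>R (A - c)"
            using phi A by (simp add: c_def linear_add[OF phi(2)] linear_scale[OF phi(2)] linear_diff[OF phi(2)])
          moreover have "y0 + t *\<^sub>R (L A - y0) \<in> ball y0 r"
          proof -
            have "norm (t *\<^sub>R (L A - y0)) = t * norm (L A - y0)" using t by simp
            also have "\<dots> \<le> \<delta> * norm (L A - y0)" using t by (intro mult_right_mono) auto
            also have "\<dots> = r * (norm (L A - y0) / (norm (L A - y0) + 1))" by (simp add: \<delta>_def)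
            also have "\<dots> < r * 1"
            proof (rule mult_strict_left_mono[OF _ r(1)])
              show "norm (L A - y0) / (norm (L A - y0) + 1) < 1"
              proof -
                have "0 < norm (L A - y0) + 1" by (smt (verit) norm_ge_zero)
                then show ?thesis by (simp add: divide_less_eq_1)
              qed
            qed
            also have "\<dots> = r" by simp
            finally show ?thesis by (simp add: dist_norm)
          qed
          ultimately show ?thesis using zb P by metis
        qed
        then have "{0<..<\<delta>} \<subseteq> {t. poly P t = 0}" by auto
        then have "P = 0" using poly_roots_finite[of P] infinite_Ioo[OF dpos] finite_subset by blast
        then show ?thesis using P[rule_format, of 1] by simp
      qed
      then show "A \<in> G" using A by (auto simp: G_def zariski_closure_GL_def)
    qed
  qed
  have injG: "inj_on L G" using injL G_eq inj_on_subset by blast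
  have img: "L ` G = \<phi> -` {M. invertible M}"
  proof
    show "L ` G \<subseteq> \<phi> -` {M. invertible M}" using G_eq phi(3) by auto
    show "\<phi> -` {M. invertible M} \<subseteq> L ` G"
    proof
      fix y assume "y \<in> \<phi> -` {M. invertible M}"
      then have "\<phi> y \<in> G" using G_eq phi(1) by auto
      then show "y \<in> L ` G" using Lphi by (metis image_eqI)
    qed
  qed
  have openimg: "open (L ` G)" unfolding img
    using contphi open_inv by (metis open_vimage)
  have cinf: "c_infinity_on (L ` G) (the_inv_into G L)"
    unfolding c_infinity_on_def
  proof
    fix k
    show "Ck_on k (L ` G) (the_inv_into G L)"
    proof (rule Ck_lin[OF openimg phi(2)])
      show "\<forall>y\<in>L ` G. the_inv_into G L y = \<phi> y"
        using G_eq phi(3) injG by (auto intro!: the_inv_into_f_eq)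
    qed
  qed
  define U where "U = G \<inter> L -` ball y0 r"
  have "open (L -` ball y0 r)" using linL
    by (intro open_vimage) (simp_all add: linear_continuous_on linear_linear)
  then have oU: "openin (top_of_set G) U" unfolding U_def by blast
  have "ball y0 r \<inter> Y \<noteq> {}" using r
    by (metis centre_in_ball closure_iff_nhds_not_empty inf_commute open_ball subset_eq)
  then have neU: "U \<noteq> {}" using SG unfolding U_def YL by blast
  have "\<phi> ` closure Y \<subseteq> closure S"
  proof (rule image_closure_subset)
    show "continuous_on (closure Y) \<phi>" using contphi continuous_on_subset by blast
    show "\<phi> ` Y \<subseteq> closure S" using phi(3) span_superset closure_subset unfolding YL by fastforce
  qed simp
  moreover have "U \<subseteq> \<phi> ` closure Y"
  proof
    fix g assume "g \<in> U"
    then have "g \<in> span S" "L g \<in> closure Y" using G_eq r unfolding U_def by auto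
    then show "g \<in> \<phi> ` closure Y" using phi(3) by (metis image_eqI)
  qed
  ultimately have "U \<subseteq> closure S" by blast
  then show ?thesis using injG openimg cinf oU neU unfolding L_def G_def by blast
qed

end
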